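(* Let $F$, $G$, $\pi$, $\Pi$ be as in the context, let $\lambda$ be a symmetric Markov measure on $\Sigma_A$ and $\lambda_0=\pi_*\lambda$. If $\mu$ is a physical measure with respect to $G$ and $\lambda$, then $\Pi_*\mu$ is a physical measure with respect to $F$ and $\lambda_0$. Moreover, if $V$ is the basin of $\mu$, then $\Pi(V)$ is contained in the basin of $\Pi_*\mu$.
   Context: $I=[0,1]$, $R(x)=1-x$. $F(\xi,p)=(\sigma(\xi),f_{\xi_0}(p))$ on $\Sigma_N\times I$, $\Sigma_N=\{1,\ldots,N\}^{\mathbb Z}$, with $f_i$ $C^1$-diffeomorphisms onto their images. $\mathcal I_P$ / $\mathcal I_R$: indices of orientation preserving / reversing $f_i$. $A=(a_{ij})_{i,j=1}^{2N}$ with $a_{ij}=1$ if ($i\in\mathcal I_P$, $j\le N$), or ($i\in\mathcal I_R$, $j>N$), or ($i-N\in\mathcal I_P$, $j>N$), or ($i-N\in\mathcal I_R$, $j\le N$), else $0$; $\Sigma_A$ the $A$-admissible sequences in $\{1,\ldots,2N\}^{\mathbb Z}$ with shift $\sigma_A$; $\pi(\omega)_n=\overline{\omega_n}$ ($\overline i=i$ for $i\le N$, $\overline i=i-N$ otherwise). $G(\omega,x)=(\sigma_A(\omega),g_{\omega_0}(x))$ with $g_i=f_i$, $g_{i+N}=R\circ f_i\circ R$ ($i\in\mathcal I_P$), $g_i=R\circ f_i$, $g_{i+N}=f_i\circ R$ ($i\in\mathcal I_R$). $C=\{\omega\colon\omega_0\le N\}$; $\Pi(\omega,x)=(\pi(\omega),x)$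 if $\omega\in C$, $(\pi(\omega),R(x))$ otherwise. A Markov measure on $\Sigma_A$ with probability vector $(p_i)$ and stochastic matrix $(P_{ij})$ is symmetric if $p_i=p_{i+N}$, $P_{ij}=P_{(i+N)(j+N)}$, $P_{i(j+N)}=P_{(i+N)j}$ for $i,j\le N$. For a step skew-product $H$ on $\Sigma\times I$ and a Markov measure $\lambda$ on $\Sigma$, an $H$-invariant probability $\mu$ is physical with respect to $H$ and $\lambda$ if its basin $V=\{(\xi,p)\colon\frac1n\sum_{i=0}^{n-1}\varphi(H^i(\xi,p))\to\int\varphi\,d\mu\ \text{for all }\varphi\in C^0(\Sigma\times I)\}$ satisfies $(\lambda\times\mathrm{Leb})(V)>0$. *)

theory Defs
  imports "HOL-Analysis.Analysis" "HOL-Probability.Probability"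
begin

text \<open>Sequences in the full shift are modelled as functions int => nat
  (product topology from Function_Topology, nat discrete); measures on them
  carry the Borel sigma-algebra of that topology.\<close>

type_synonym seq = "int \<Rightarrow> nat"

definition II :: "real set" where "II = {0..1}"

definition R :: "real \<Rightarrow> real" where "R x = 1 - x"

definition shift :: "seq \<Rightarrow> seq" where "shift \<xi> = (\<lambda>n. \<xi> (n + 1))"

definition SigmaN :: "nat \<Rightarrow> seq set" where
  "SigmaN N = {\<xi>. \<forall>n. \<xi> n \<in> {1..N}}"

definition C1_diffeo_onto_image :: "(real \<Rightarrow> real) \<Rightarrow> bool" where
  "C1_diffeo_onto_image h \<longleftrightarrow> h ` II \<subseteq> II \<and> inj_on h II \<and>
     (\<exists>h'. (\<forall>x\<in>II. (h has_real_derivative h' x) (at x within II)) \<and> continuous_on II h') \<and>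
     (\<exists>k'. (\<forall>y\<in>h ` II. (inv_into II h has_real_derivative k' y) (at y within h ` II))
           \<and> continuous_on (h ` II) k')"

definition IP :: "nat \<Rightarrow> (nat \<Rightarrow> real \<Rightarrow> real) \<Rightarrow> nat set" where
  "IP N f = {i \<in> {1..N}. strict_mono_on II (f i)}"

definition IR :: "nat \<Rightarrow> (nat \<Rightarrow> real \<Rightarrow> real) \<Rightarrow> nat set" where
  "IR N f = {i \<in> {1..N}. strict_antimono_on II (f i)}"

text \<open>The transition matrix A (entries a_ij = 1 encoded as True).\<close>
definition Aadm :: "nat \<Rightarrow> (nat \<Rightarrow> real \<Rightarrow> real) \<Rightarrow> nat \<Rightarrow> nat \<Rightarrow> bool" where
  "Aadm N f i j \<longleftrightarrow> i \<in> {1..2*N} \<and> j \<in> {1..2*N} \<and>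
     ((i \<in> IP N f \<and> j \<le> N) \<or> (i \<in> IR N f \<and> j > N) \<or>
      (i > N \<and> i - N \<in> IP N f \<and> j > N) \<or> (i > N \<and> i - N \<in> IR N f \<and> j \<le> N))"

definition SigmaA :: "nat \<Rightarrow> (nat \<Rightarrow> real \<Rightarrow> real) \<Rightarrow> seq set" where
  "SigmaA N f = {\<omega>. (\<forall>n. \<omega> n \<in> {1..2*N}) \<and> (\<forall>n. Aadm N f (\<omega> n) (\<omega> (n + 1)))}"

definition bar :: "nat \<Rightarrow> nat \<Rightarrow> nat" where
  "bar N i = (if i \<le> N then i else i - N)"

definition proj :: "nat \<Rightarrow> seq \<Rightarrow> seq" where
  "proj N \<omega> = (\<lambda>n. bar N (\<omega> n))"

definition gmap :: "nat \<Rightarrow> (nat \<Rightarrow> real \<Rightarrow> real) \<Rightarrow> nat \<Rightarrow> real \<Rightarrow> real" where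
  "gmap N f i =
     (if i \<le> N then (if i \<in> IP N f then f i else R \<circ> f i)
      else (if i - N \<in> IP N f then R \<circ> f (i - N) \<circ> R else f (i - N) \<circ> R))"

definition Fmap :: "(nat \<Rightarrow> real \<Rightarrow> real) \<Rightarrow> seq \<times> real \<Rightarrow> seq \<times> real" where
  "Fmap f = (\<lambda>(\<xi>, p). (shift \<xi>, f (\<xi> 0) p))"

definition Gmap :: "nat \<Rightarrow> (nat \<Rightarrow> real \<Rightarrow> real) \<Rightarrow> seq \<times> real \<Rightarrow> seq \<times> real" where
  "Gmap N f = (\<lambda>(\<omega>, x). (shift \<omega>, gmap N f (\<omega> 0) x))"

definition PiMap :: "nat \<Rightarrow> seq \<times> real \<Rightarrow> seq \<times> real" where
  "PiMap N = (\<lambda>(\<omega>, x). (proj N \<omega>, if \<omega> 0 \<le> N then x else R x))"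

definition markov_measure ::
  "nat \<Rightarrow> (nat \<Rightarrow> nat \<Rightarrow> bool) \<Rightarrow> (nat \<Rightarrow> real) \<Rightarrow> (nat \<Rightarrow> nat \<Rightarrow> real) \<Rightarrow> seq measure \<Rightarrow> bool" where
  "markov_measure M adm p P lam \<longleftrightarrow>
     (\<forall>i\<in>{1..M}. p i \<ge> 0) \<and> (\<Sum>i=1..M. p i) = 1 \<and>
     (\<forall>i\<in>{1..M}. \<forall>j\<in>{1..M}. P i j \<ge> 0) \<and> (\<forall>i\<in>{1..M}. (\<Sum>j=1..M. P i j) = 1) \<and>
     (\<forall>i\<in>{1..M}. \<forall>j\<in>{1..M}. \<not> adm i j \<longrightarrow> P i j = 0) \<and>
     prob_space lam \<and> sets lam = sets (borel :: seq measure) \<and>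
     (\<forall>(m::int) (w::nat list). w \<noteq> [] \<longrightarrow> set w \<subseteq> {1..M} \<longrightarrow>
        measure lam {\<omega>. \<forall>k<length w. \<omega> (m + int k) = w ! k}
          = p (w ! 0) * (\<Prod>k<length w - 1. P (w ! k) (w ! (k + 1))))"

definition symmetric_markov ::
  "nat \<Rightarrow> (nat \<Rightarrow> real) \<Rightarrow> (nat \<Rightarrow> nat \<Rightarrow> real) \<Rightarrow> bool" where
  "symmetric_markov N p P \<longleftrightarrow>
     (\<forall>i\<in>{1..N}. p i = p (i + N)) \<and>
     (\<forall>i\<in>{1..N}. \<forall>j\<in>{1..N}. P i j = P (i + N) (j + N) \<and> P i (j + N) = P (i + N) j)"

definition invariant_prob ::
  "(seq \<times> real \<Rightarrow> seq \<times> real) \<Rightarrow> seq set \<Rightarrow> (seq \<times> real) measure \<Rightarrow> bool" where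
  "invariant_prob H Sig mu \<longleftrightarrow>
     prob_space mu \<and> sets mu = sets (borel :: (seq \<times> real) measure) \<and>
     emeasure mu (Sig \<times> II) = 1 \<and>
     (\<forall>A\<in>sets mu. emeasure mu (H -` A \<inter> (Sig \<times> II)) = emeasure mu A)"

definition basin ::
  "(seq \<times> real \<Rightarrow> seq \<times> real) \<Rightarrow> seq set \<Rightarrow> (seq \<times> real) measure \<Rightarrow> (seq \<times> real) set" where
  "basin H Sig mu = {z \<in> Sig \<times> II. \<forall>\<phi> :: seq \<times> real \<Rightarrow> real. continuous_on (Sig \<times> II) \<phi> \<longrightarrow>
      (\<lambda>n. (\<Sum>i<n. \<phi> ((H ^^ i) z)) / real n) \<longlonglongrightarrow> (LINT w:Sig \<times> II|mu. \<phi> w)}"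

definition physical ::
  "(seq \<times> real \<Rightarrow> seq \<times> real) \<Rightarrow> seq set \<Rightarrow> seq measure \<Rightarrow> (seq \<times> real) measure \<Rightarrow> bool" where
  "physical H Sig lam mu \<longleftrightarrow> invariant_prob H Sig mu \<and>
     emeasure (lam \<Otimes>\<^sub>M lborel) (basin H Sig mu) > 0"

end

theory Submission
  imports Defs
begin

lemma cont_coord: "continuous_on UNIV (\<lambda>\<omega>::seq. (g::nat\<Rightarrow>'b::topological_space) (\<omega> k))"
  by (rule continuous_on_compose2[OF Topological_Spaces.continuous_on_discrete[of UNIV g] continuous_on_product_coordinates]) auto

lemma open_coord2: "open {\<omega>::seq. P (\<omega> n) (\<omega> m)}"
proof -
  have "{\<omega>::seq. P (\<omega> n) (\<omega> m)} = (\<Union>(a,b)\<in>{(a,b). P a b}. {\<omega>. \<omega> n = a} \<inter> {\<omega>. \<omega> m = b})"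
    by auto
  moreover have "open ({\<omega>::seq. \<omega> n = a} \<inter> {\<omega>. \<omega> m = b})" for a b
  proof -
    have "open ((\<lambda>\<omega>::seq. \<omega> k) -` {c})" for k c
      by (rule open_vimage[OF _ continuous_on_product_coordinates]) (simp add: discrete_topology_class.open_discrete)
    then show ?thesis by (simp add: vimage_def open_Int)
  qed
  ultimately show ?thesis by (metis (no_types, lifting) open_UN case_prod_conv prod.collapse)
qed

lemma closed_coord2: "closed {\<omega>::seq. P (\<omega> n) (\<omega> m)}"
proof -
  have "{\<omega>::seq. P (\<omega> n) (\<omega> m)} = - {\<omega>::seq. \<not> P (\<omega> n) (\<omega> m)}" by auto
  then show ?thesis using open_coord2[of "\<lambda>a b. \<not> P a b" n m] by (simp add: closed_def)
qed

lemma closed_SigmaN: "closed (SigmaN N)"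
proof -
  have "SigmaN N = (\<Inter>n. {\<omega>::seq. (\<lambda>a b. a \<in> {1..N}) (\<omega> n) (\<omega> n)})" by (auto simp: SigmaN_def)
  moreover have "closed {\<omega>::seq. \<omega> n \<in> {1..N}}" for n
    using closed_coord2[of "\<lambda>a b. a \<in> {1..N}" n n] by simp
  ultimately show ?thesis by (simp add: closed_INT)
qed

lemma closed_SigmaA: "closed (SigmaA N f)"
proof -
  have "SigmaA N f = (\<Inter>n. {\<omega>::seq. (\<lambda>a b. a \<in> {1..2*N} \<and> Aadm N f a b) (\<omega> n) (\<omega> (n+1))})"
    by (auto simp: SigmaA_def)
  moreover have "closed {\<omega>::seq. \<omega> n \<in> {1..2*N} \<and> Aadm N f (\<omega> n) (\<omega> (n + 1))}" for n
    using closed_coord2[of "\<lambda>a b. a \<in> {1..2*N} \<and> Aadm N f a b" n "n+1"] by simp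
  ultimately show ?thesis by (simp add: closed_INT)
qed

lemma compact_SigmaN: "compact (SigmaN N)"
proof -
  have "SigmaN N = PiE UNIV (\<lambda>_. {1..N})" by (auto simp: SigmaN_def PiE_def extensional_def)
  moreover have "compactin (product_topology (\<lambda>_. euclidean) UNIV) (PiE (UNIV::int set) (\<lambda>_. {1..N::nat}))"
    by (subst compactin_PiE) (auto simp: compactin_euclidean_iff intro: finite_imp_compact)
  ultimately show ?thesis by (simp add: euclidean_product_topology compactin_euclidean_iff)
qed

lemma compact_II: "compact II" by (simp add: II_def)

lemma compact_K: "compact (SigmaN N \<times> II)"
  by (intro compact_Times compact_SigmaN compact_II)

lemma closed_SAI: "closed (SigmaA N f \<times> II)"
  by (intro closed_Times closed_SigmaA) (simp add: II_def)

lemma cont_shift: "continuous_on UNIV shift"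
  unfolding shift_def by (intro continuous_on_coordinatewise_then_product continuous_on_product_coordinates)

lemma cont_proj: "continuous_on UNIV (proj N)"
  unfolding proj_def by (intro continuous_on_coordinatewise_then_product cont_coord)

lemma cont_coord_fst: "continuous_on UNIV (\<lambda>z::seq\<times>real. (g::nat\<Rightarrow>'b::topological_space) (fst z k))"
  by (rule continuous_on_compose2[OF cont_coord continuous_on_fst]) (auto intro: continuous_on_id)

lemma PiMap_alt: "PiMap N z = (proj N (fst z), (if fst z 0 \<le> N then 1 else 0) * snd z + (1 - (if fst z 0 \<le> N then 1 else 0)) * (1 - snd z))"
proof -
  obtain \<omega> x where zz: "z = (\<omega>, x)" by (cases z)
  show ?thesis by (cases "\<omega> 0 \<le> N") (simp_all add: zz PiMap_def R_def)
qed

lemma cont_PiMap: "continuous_on UNIV (PiMap N)"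
proof -
  have c1: "continuous_on UNIV (\<lambda>z::seq\<times>real. proj N (fst z))"
    by (rule continuous_on_compose2[OF cont_proj continuous_on_fst]) auto
  have c2: "continuous_on UNIV (\<lambda>z::seq\<times>real. (if fst z 0 \<le> N then 1 else 0)::real)"
    using cont_coord_fst[of "\<lambda>a. if a \<le> N then 1 else (0::real)" 0] by simp
  have c3: "continuous_on UNIV (\<lambda>z::seq\<times>real. snd z)" by (rule continuous_on_snd[OF continuous_on_id])
  have "continuous_on UNIV (\<lambda>z::seq\<times>real. (proj N (fst z), (if fst z 0 \<le> N then 1 else 0) * snd z + (1 - (if fst z 0 \<le> N then 1 else 0)) * (1 - snd z)))"
    by (intro continuous_on_Pair c1 continuous_on_add continuous_on_mult c2 c3 continuous_on_diff continuous_on_const)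
  then show ?thesis by (simp add: PiMap_alt[abs_def])
qed

lemma meas_PiMap: "PiMap N \<in> borel_measurable borel"
  by (rule borel_measurable_continuous_onI[OF cont_PiMap])

lemma meas_proj: "proj N \<in> borel_measurable borel"
  by (rule borel_measurable_continuous_onI[OF cont_proj])

definition clamp :: "real \<Rightarrow> real" where "clamp p = max 0 (min 1 p)"

definition Fm :: "nat \<Rightarrow> (nat \<Rightarrow> real \<Rightarrow> real) \<Rightarrow> seq \<times> real \<Rightarrow> seq \<times> real" where
  "Fm N f z = (shift (fst z), \<Sum>i\<in>{1..N}. (if fst z 0 = i then 1 else 0) * f i (clamp (snd z)))"

lemma C1_cont: "C1_diffeo_onto_image h \<Longrightarrow> continuous_on II h"
  unfolding C1_diffeo_onto_image_def by (metis DERIV_continuous_on)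

lemma C1_maps: "C1_diffeo_onto_image h \<Longrightarrow> x \<in> II \<Longrightarrow> h x \<in> II"
  unfolding C1_diffeo_onto_image_def by blast

lemma cont_clamp: "continuous_on UNIV clamp"
  unfolding clamp_def by (intro continuous_intros)

lemma clamp_II: "clamp p \<in> II" "p \<in> II \<Longrightarrow> clamp p = p"
  by (auto simp: clamp_def II_def)

lemma cont_Fm:
  assumes "\<forall>i\<in>{1..N}. C1_diffeo_onto_image (f i)"
  shows "continuous_on UNIV (Fm N f)"
proof -
  have c: "continuous_on UNIV (\<lambda>z::seq\<times>real. f i (clamp (snd z)))" if "i \<in> {1..N}" for i
  proof -
    have "continuous_on UNIV (\<lambda>p. f i (clamp p))"
      by (rule continuous_on_compose2[OF C1_cont cont_clamp]) (use assms that clamp_II in auto)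
    then show ?thesis by (rule continuous_on_compose2[OF _ continuous_on_snd]) auto
  qed
  have c2: "continuous_on UNIV (\<lambda>z::seq\<times>real. (if fst z 0 = i then 1 else 0)::real)" for i
    using cont_coord_fst[of "\<lambda>a. if a = i then 1 else (0::real)" 0] by simp
  have c1: "continuous_on UNIV (\<lambda>z::seq\<times>real. shift (fst z))"
    by (rule continuous_on_compose2[OF cont_shift continuous_on_fst]) auto
  have "continuous_on UNIV (\<lambda>z::seq\<times>real. \<Sum>i\<in>{1..N}. (if fst z 0 = i then 1 else 0) * f i (clamp (snd z)))"
    by (intro continuous_on_sum ballI continuous_on_mult c2 c)
  then show ?thesis unfolding Fm_def by (intro continuous_on_Pair c1)
qed

lemma meas_Fm: "\<forall>i\<in>{1..N}. C1_diffeo_onto_image (f i) \<Longrightarrow> Fm N f \<in> borel_measurable borel"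
  by (rule borel_measurable_continuous_onI[OF cont_Fm])

lemma Fm_eq: "z \<in> SigmaN N \<times> II \<Longrightarrow> Fm N f z = Fmap f z"
proof -
  assume z: "z \<in> SigmaN N \<times> II"
  obtain \<xi> p where zz: "z = (\<xi>, p)" by (cases z)
  have "\<xi> 0 \<in> {1..N}" "p \<in> II" using z zz by (auto simp: SigmaN_def)
  then have "(\<Sum>i\<in>{1..N}. (if \<xi> 0 = i then 1 else 0) * f i (clamp p)) = f (\<xi> 0) p"
    by (simp add: clamp_II if_distrib[where f="\<lambda>a. a * _"] cong: if_cong)
  then show ?thesis by (simp add: zz Fm_def Fmap_def)
qed

lemma Fmap_K:
  assumes "\<forall>i\<in>{1..N}. C1_diffeo_onto_image (f i)" "z \<in> SigmaN N \<times> II"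
  shows "Fmap f z \<in> SigmaN N \<times> II"
  proof -
  obtain \<xi> p where zz: "z = (\<xi>, p)" by (cases z)
  have "\<xi> 0 \<in> {1..N}" "p \<in> II" "\<forall>n. \<xi> n \<in> {1..N}" using assms(2) zz by (auto simp: SigmaN_def)
  then have "f (\<xi> 0) p \<in> II" "shift \<xi> \<in> SigmaN N" using assms(1) C1_maps by (auto simp: SigmaN_def shift_def simp del: atLeastAtMost_iff)
  then show ?thesis by (simp add: zz Fmap_def)
qed

lemma R_II: "x \<in> II \<Longrightarrow> R x \<in> II" by (auto simp: R_def II_def)
lemma RR: "R (R x) = x" by (simp add: R_def)

lemma IP_IR_disj: "i \<in> IP N f \<Longrightarrow> i \<in> IR N f \<Longrightarrow> False"
proof -
  assume "i \<in> IP N f" "i \<in> IR N f"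
  then have "f i 0 < f i 1" "f i 0 > f i 1"
    by (auto simp: IP_def IR_def II_def monotone_on_def)
  then show False by simp
qed

lemma Gmap_SAI:
  assumes "\<forall>i\<in>{1..N}. C1_diffeo_onto_image (f i)" "z \<in> SigmaA N f \<times> II"
  shows "Gmap N f z \<in> SigmaA N f \<times> II"
proof -
  obtain \<omega> x where zz: "z = (\<omega>, x)" by (cases z)
  have w: "\<omega> \<in> SigmaA N f" and x: "x \<in> II" using assms zz by auto
  have "shift \<omega> \<in> SigmaA N f"
  proof -
    have "\<forall>n. \<omega> n \<in> {1..2*N}" "\<forall>n. Aadm N f (\<omega> n) (\<omega> (n + 1))" using w by (auto simp: SigmaA_def)
    then have "\<forall>n. \<omega> (n+1) \<in> {1..2*N}" "\<forall>n. Aadm N f (\<omega> (n+1)) (\<omega> ((n+1) + 1))" by blast+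
    then show ?thesis unfolding SigmaA_def shift_def by simp
  qed
  moreover have "gmap N f (\<omega> 0) x \<in> II"
  proof -
    have a: "\<omega> 0 \<in> {1..2*N}" using w by (auto simp: SigmaA_def)
    show ?thesis
    proof (cases "\<omega> 0 \<le> N")
      case True
      then have "C1_diffeo_onto_image (f (\<omega> 0))" using a assms(1) by auto
      then have "f (\<omega> 0) x \<in> II" using x by (rule C1_maps)
      then show ?thesis using True by (simp add: gmap_def R_II)
    next
      case False
      then have "\<omega> 0 - N \<in> {1..N}" using a by auto
      then have "C1_diffeo_onto_image (f (\<omega> 0 - N))" using assms(1) by blast
      then have "f (\<omega> 0 - N) x \<in> II" "f (\<omega> 0 - N) (R x) \<in> II" using x R_II by (blast intro: C1_maps)+
      then show ?thesis using False by (simp add: gmap_def R_II)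
    qed
  qed
  ultimately show ?thesis by (simp add: zz Gmap_def)
qed

lemma bar_range: "k \<in> {1..2*N} \<Longrightarrow> bar N k \<in> {1..N}"
  unfolding bar_def by (cases "k \<le> N") auto

lemma PiMap_SAI: "z \<in> SigmaA N f \<times> II \<Longrightarrow> PiMap N z \<in> SigmaN N \<times> II"
proof -
  assume z: "z \<in> SigmaA N f \<times> II"
  obtain \<omega> x where zz: "z = (\<omega>, x)" by (cases z)
  have "\<forall>n. \<omega> n \<in> {1..2*N}" "x \<in> II" using z zz by (auto simp: SigmaA_def)
  then have "\<forall>n. bar N (\<omega> n) \<in> {1..N}" by (blast intro: bar_range)
  then have "proj N \<omega> \<in> SigmaN N" by (simp add: SigmaN_def proj_def)
  moreover have "(if \<omega> 0 \<le> N then x else R x) \<in> II" using \<open>x \<in> II\<close> R_II by simp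
  ultimately show ?thesis by (simp add: zz PiMap_def)
qed

lemma IP_le: "i \<in> IP N f \<Longrightarrow> i \<le> N" by (simp add: IP_def)
lemma IR_le: "i \<in> IR N f \<Longrightarrow> i \<le> N" by (simp add: IR_def)

lemma Aadm_cases: "Aadm N f i j \<Longrightarrow> (i \<in> IP N f \<and> j \<le> N) \<or> (i \<in> IR N f \<and> N < j) \<or>
   (N < i \<and> i - N \<in> IP N f \<and> N < j) \<or> (N < i \<and> i - N \<in> IR N f \<and> j \<le> N)"
proof -
  assume "Aadm N f i j"
  then have "i \<in> {1..2*N} \<and> j \<in> {1..2*N} \<and> ((i \<in> IP N f \<and> j \<le> N) \<or> (i \<in> IR N f \<and> N < j) \<or>
   (N < i \<and> i - N \<in> IP N f \<and> N < j) \<or> (N < i \<and> i - N \<in> IR N f \<and> j \<le> N))" unfolding Aadm_def .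
  then show ?thesis by (rule conjunct2[OF conjunct2])
qed

lemma semiconj:
  assumes "z \<in> SigmaA N f \<times> II"
  shows "PiMap N (Gmap N f z) = Fmap f (PiMap N z)"
proof -
  obtain \<omega> x where zz: "z = (\<omega>, x)" by (cases z)
  have w: "\<omega> \<in> SigmaA N f" using assms zz by auto
  have "\<forall>n. Aadm N f (\<omega> n) (\<omega> (n + 1))" using w unfolding SigmaA_def by blast
  then have "Aadm N f (\<omega> 0) (\<omega> (0 + 1))" by blast
  then have ad: "Aadm N f (\<omega> 0) (\<omega> 1)" by simp
  have sp: "shift (proj N \<omega>) = proj N (shift \<omega>)" by (simp add: shift_def proj_def)
  have "(if shift \<omega> 0 \<le> N then gmap N f (\<omega> 0) x else R (gmap N f (\<omega> 0) x))
        = f (bar N (\<omega> 0)) (if \<omega> 0 \<le> N then x else R x)"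
  proof (cases "\<omega> 0 \<le> N")
    case T: True
    show ?thesis
    proof (cases "\<omega> 0 \<in> IP N f")
      case True
      then have "\<omega> 1 \<le> N" using Aadm_cases[OF ad] T IP_IR_disj[of "\<omega> 0" N f] by auto
      then show ?thesis using T True by (simp add: gmap_def shift_def bar_def)
    next
      case False
      then have "\<omega> 1 > N" using Aadm_cases[OF ad] T by auto
      then show ?thesis using T False by (simp add: gmap_def shift_def bar_def RR)
    qed
  next
    case T: False
    show ?thesis
    proof (cases "\<omega> 0 - N \<in> IP N f")
      case True
      then have "\<omega> 1 > N" using Aadm_cases[OF ad] T IP_IR_disj[of "\<omega> 0 - N" N f] IP_le[of "\<omega> 0" N f] IR_le[of "\<omega> 0" N f] by auto
      then show ?thesis using T True by (simp add: gmap_def shift_def bar_def RR)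
    next
      case False
      then have "\<omega> 1 \<le> N" using Aadm_cases[OF ad] T IP_le[of "\<omega> 0" N f] IR_le[of "\<omega> 0" N f] by auto
      then show ?thesis using T False by (simp add: gmap_def shift_def bar_def)
    qed
  qed
  then show ?thesis by (simp add: zz PiMap_def Gmap_def Fmap_def proj_def shift_def)
qed

lemma semiconj_pow:
  assumes "\<forall>i\<in>{1..N}. C1_diffeo_onto_image (f i)" "z \<in> SigmaA N f \<times> II"
  shows "PiMap N ((Gmap N f ^^ n) z) = (Fmap f ^^ n) (PiMap N z) \<and> (Gmap N f ^^ n) z \<in> SigmaA N f \<times> II"
proof (induction n)
  case 0
  then show ?case using assms(2) by simp
next
  case (Suc n)
  then have w: "(Gmap N f ^^ n) z \<in> SigmaA N f \<times> II" and e: "PiMap N ((Gmap N f ^^ n) z) = (Fmap f ^^ n) (PiMap N z)" by auto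
  have "PiMap N ((Gmap N f ^^ Suc n) z) = Fmap f (PiMap N ((Gmap N f ^^ n) z))" using semiconj[OF w] by simp
  also have "\<dots> = (Fmap f ^^ Suc n) (PiMap N z)" using e by simp
  finally show ?case using Gmap_SAI[OF assms(1) w] by simp
qed

lemma Fm_pow:
  assumes "\<forall>i\<in>{1..N}. C1_diffeo_onto_image (f i)" "z \<in> SigmaN N \<times> II"
  shows "(Fm N f ^^ n) z = (Fmap f ^^ n) z \<and> (Fmap f ^^ n) z \<in> SigmaN N \<times> II"
proof (induction n)
  case 0
  then show ?case using assms(2) by simp
next
  case (Suc n)
  then have w: "(Fmap f ^^ n) z \<in> SigmaN N \<times> II" and e: "(Fm N f ^^ n) z = (Fmap f ^^ n) z" by auto
  have "(Fm N f ^^ Suc n) z = Fm N f ((Fmap f ^^ n) z)" using e by simp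
  also have "\<dots> = (Fmap f ^^ Suc n) z" using Fm_eq[OF w] by simp
  finally show ?case using Fmap_K[OF assms(1) w] by simp
qed

lemma distr_R: "distr lborel borel R = (lborel :: real measure)"
proof -
  have "lborel = density (distr lborel borel (\<lambda>x::real. 1 + (-1) * x)) (\<lambda>_. ennreal (abs (-1)))"
    by (rule lborel_real_affine) simp
  moreover have "(\<lambda>x::real. 1 + (-1) * x) = R" by (auto simp: R_def)
  ultimately show ?thesis by (simp add: density_1)
qed

definition gen :: "(int \<times> nat) option \<Rightarrow> seq \<times> real \<Rightarrow> real" where
  "gen g z = (case g of None \<Rightarrow> snd z | Some kj \<Rightarrow> (if fst z (fst kj) = snd kj then 1 else 0))"

definition mnm :: "(int \<times> nat) option list \<Rightarrow> seq \<times> real \<Rightarrow> real" where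
  "mnm L z = prod_list (map (\<lambda>g. gen g z) L)"

definition lin :: "(real \<times> (int \<times> nat) option list) list \<Rightarrow> seq \<times> real \<Rightarrow> real" where
  "lin CL z = sum_list (map (\<lambda>cL. fst cL * mnm (snd cL) z) CL)"

definition pmul :: "(real \<times> (int \<times> nat) option list) list \<Rightarrow> (real \<times> (int \<times> nat) option list) list \<Rightarrow> (real \<times> (int \<times> nat) option list) list" where
  "pmul A B = concat (map (\<lambda>cL. map (\<lambda>dM. (fst cL * fst dM, snd cL @ snd dM)) B) A)"

lemma cont_gen: "continuous_on UNIV (gen g)"
proof (cases g)
  case None
  then show ?thesis by (simp add: gen_def[abs_def] continuous_on_snd[OF continuous_on_id])
next
  case (Some kj)
  then show ?thesis
    using cont_coord_fst[of "\<lambda>a. if a = snd kj then 1 else (0::real)" "fst kj"]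
    by (simp add: gen_def[abs_def])
qed

lemma mono_Nil: "mnm [] z = 1" by (simp add: mnm_def)
lemma mono_Cons: "mnm (g # L) z = gen g z * mnm L z" by (simp add: mnm_def)
lemma mono_append: "mnm (L @ M) z = mnm L z * mnm M z" by (simp add: mnm_def)

lemma cont_mono: "continuous_on UNIV (mnm L)"
proof (induction L)
  case Nil
  then show ?case by (simp add: mono_Nil[abs_def])
next
  case (Cons g L)
  have "continuous_on UNIV (\<lambda>z. gen g z * mnm L z)"
    by (intro continuous_on_mult cont_gen Cons)
  then show ?case by (simp add: mono_Cons[abs_def])
qed

lemma lin_Nil: "lin [] z = 0" by (simp add: lin_def)
lemma lin_Cons: "lin (cL # CL) z = fst cL * mnm (snd cL) z + lin CL z" by (simp add: lin_def)
lemma lin_append: "lin (A @ B) z = lin A z + lin B z" by (simp add: lin_def)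

lemma cont_lin: "continuous_on UNIV (lin CL)"
proof (induction CL)
  case Nil
  then show ?case by (simp add: lin_Nil[abs_def])
next
  case (Cons cL CL)
  have "continuous_on UNIV (\<lambda>z. fst cL * mnm (snd cL) z + lin CL z)"
    by (intro continuous_on_add continuous_on_mult continuous_on_const cont_mono Cons)
  then show ?case by (simp add: lin_Cons[abs_def])
qed

lemma lin_map: "lin (map (\<lambda>dM. (c * fst dM, L @ snd dM)) B) z = c * mnm L z * lin B z"
  by (induction B) (simp_all add: lin_Nil lin_Cons mono_append algebra_simps)

lemma lin_pmul: "lin (pmul A B) z = lin A z * lin B z"
  by (induction A) (simp_all add: pmul_def lin_Nil lin_Cons lin_append lin_map algebra_simps)

lemma lin_const: "lin [(c, [])] z = c" by (simp add: lin_Cons lin_Nil mono_Nil)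

lemma sep_lin: "a \<noteq> b \<Longrightarrow> \<exists>CL. lin CL a \<noteq> lin CL b"
proof (cases "fst a = fst b")
  case True
  assume "a \<noteq> b"
  then have "snd a \<noteq> snd b" using True by (simp add: prod_eq_iff)
  then show ?thesis
    by (intro exI[of _ "[(1, [None])]"]) (simp_all add: lin_Cons lin_Nil mono_Cons mono_Nil gen_def)
next
  case False
  then obtain k where "fst a k \<noteq> fst b k" by (auto simp: fun_eq_iff)
  then show ?thesis
    by (intro exI[of _ "[(1, [Some (k, fst a k)])]"]) (simp_all add: lin_Cons lin_Nil mono_Cons mono_Nil gen_def)
qed

definition emb :: "seq \<times> real \<Rightarrow> (int \<Rightarrow> real) \<times> real" where
  "emb z = ((\<lambda>k. real (fst z k)), snd z)"

definition unemb :: "(int \<Rightarrow> real) \<times> real \<Rightarrow> seq \<times> real" where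
  "unemb w = ((\<lambda>k. nat \<lfloor>fst w k\<rfloor>), snd w)"

lemma unemb_emb: "unemb (emb z) = z"
  by (simp add: unemb_def emb_def)

lemma cont_emb: "continuous_on UNIV emb"
proof -
  have "continuous_on UNIV (\<lambda>z::seq\<times>real. (\<lambda>k. real (fst z k)))"
    by (intro continuous_on_coordinatewise_then_product cont_coord_fst)
  then show ?thesis unfolding emb_def[abs_def]
    by (intro continuous_on_Pair continuous_on_snd continuous_on_id)
qed

lemma SW_approx:
  assumes K: "compact K" and phi: "continuous_on K \<phi>" and e: "e > 0"
  shows "\<exists>CL. \<forall>z\<in>K. \<bar>\<phi> z - lin CL z\<bar> < e"
proof -
  define K' where "K' = emb ` K"
  have cK': "compact K'" unfolding K'_def
    by (rule compact_continuous_image[OF continuous_on_subset[OF cont_emb] K]) simp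
  have cg: "continuous_on K' unemb" unfolding K'_def
    by (rule continuous_on_inv[OF continuous_on_subset[OF cont_emb] K]) (simp_all add: unemb_emb)
  have gK: "unemb ` K' \<subseteq> K" unfolding K'_def image_image unemb_emb by simp
  interpret fr: function_ring_on "range (\<lambda>CL w. lin CL (unemb w))" K'
  proof (unfold_locales)
    show "compact K'" by (rule cK')
  next
    fix f assume "f \<in> range (\<lambda>CL w. lin CL (unemb w))"
    then obtain CL where "f = (\<lambda>w. lin CL (unemb w))" by blast
    then show "continuous_on K' f"
      by (simp only:) (rule continuous_on_compose2[OF cont_lin cg], simp)
  next
    fix f g assume "f \<in> range (\<lambda>CL w. lin CL (unemb w))" "g \<in> range (\<lambda>CL w. lin CL (unemb w))"
    then obtain A B where fg: "f = (\<lambda>w. lin A (unemb w))" "g = (\<lambda>w. lin B (unemb w))" by blast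
    show "(\<lambda>x. f x + g x) \<in> range (\<lambda>CL w. lin CL (unemb w))"
      by (rule range_eqI[of _ _ "A @ B"]) (simp add: fg lin_append fun_eq_iff)
    show "(\<lambda>x. f x * g x) \<in> range (\<lambda>CL w. lin CL (unemb w))"
      by (rule range_eqI[of _ _ "pmul A B"]) (simp add: fg lin_pmul fun_eq_iff)
  next
    fix c :: real show "(\<lambda>_. c) \<in> range (\<lambda>CL w. lin CL (unemb w))"
      by (rule range_eqI[of _ _ "[(c, [])]"]) (simp add: lin_const fun_eq_iff)
  next
    fix x y assume xy: "x \<in> K'" "y \<in> K'" "x \<noteq> y"
    obtain a b where "x = emb a" "y = emb b" using xy(1,2) unfolding K'_def by blast
    then have "unemb x \<noteq> unemb y" using xy(3) by (metis unemb_emb)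
    then obtain CL where ne: "lin CL (unemb x) \<noteq> lin CL (unemb y)" using sep_lin by blast
    show "\<exists>f\<in>range (\<lambda>CL w. lin CL (unemb w)). f x \<noteq> f y"
    proof
      show "(\<lambda>w. lin CL (unemb w)) \<in> range (\<lambda>CL w. lin CL (unemb w))" by (rule rangeI)
      show "(\<lambda>w. lin CL (unemb w)) x \<noteq> (\<lambda>w. lin CL (unemb w)) y" using ne by simp
    qed
  qed
  have "continuous_on K' (\<lambda>w. \<phi> (unemb w))"
    by (rule continuous_on_compose2[OF phi cg gK])
  from fr.Stone_Weierstrass_basic[OF this e] obtain g where
    g: "g \<in> range (\<lambda>CL w. lin CL (unemb w))" "\<forall>x\<in>K'. \<bar>\<phi> (unemb x) - g x\<bar> < e" by blast
  then obtain CL where gg: "g = (\<lambda>w. lin CL (unemb w))" by blast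
  show ?thesis
  proof (intro exI ballI)
    fix z assume "z \<in> K"
    then have "emb z \<in> K'" by (simp add: K'_def)
    then have "\<bar>\<phi> (unemb (emb z)) - lin CL (unemb (emb z))\<bar> < e" using g(2) by (simp add: gg)
    then show "\<bar>\<phi> z - lin CL z\<bar> < e" by (simp only: unemb_emb)
  qed
qed

lemma bound_int:
  fixes f :: "'a \<Rightarrow> real"
  assumes P: "prob_space M" and f: "integrable M f" and b: "\<And>x. \<bar>f x\<bar> \<le> c"
  shows "\<bar>integral\<^sup>L M f\<bar> \<le> c"
proof -
  interpret prob_space M by (rule P)
  have lb: "- c \<le> f x" "f x \<le> c" for x using b[of x] unfolding abs_le_iff by linarith+
  have "integral\<^sup>L M f \<le> integral\<^sup>L M (\<lambda>x. c)"
    by (rule integral_mono[OF f]) (use lb in auto)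
  moreover have "integral\<^sup>L M (\<lambda>x. - c) \<le> integral\<^sup>L M f"
    by (rule integral_mono[OF _ f]) (use lb in auto)
  ultimately show ?thesis by (simp add: prob_space)
qed

lemma cont_set_integrable:
  fixes \<phi> :: "seq \<times> real \<Rightarrow> real"
  assumes K: "compact K" and Kc: "closed K" and P: "prob_space \<nu>" and s: "sets \<nu> = sets borel" and c: "continuous_on K \<phi>"
  shows "set_integrable \<nu> K \<phi>"
proof -
  interpret prob_space \<nu> by (rule P)
  have Kb: "K \<in> sets borel" using Kc by (simp add: borel_closed)
  have m: "(\<lambda>x. indicator K x *\<^sub>R \<phi> x) \<in> borel_measurable borel"
    by (rule borel_measurable_continuous_on_indicator[OF Kb c])
  then have m': "(\<lambda>x. indicator K x *\<^sub>R \<phi> x) \<in> borel_measurable \<nu>"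
    using measurable_cong_sets[OF s refl] by blast
  obtain B where B: "\<forall>x\<in>K. norm (\<phi> x) \<le> B"
    using compact_imp_bounded[OF compact_continuous_image[OF c K]] by (auto simp: bounded_iff)
  have "\<And>x. norm (indicator K x *\<^sub>R \<phi> x) \<le> max B 0"
    using B by (auto simp: indicator_def)
  then have "AE x in \<nu>. norm (indicator K x *\<^sub>R \<phi> x) \<le> max B 0" by (intro AE_I2)
  then show ?thesis unfolding set_integrable_def
    by (rule integrable_const_bound[OF _ m'])
qed

definition avg :: "(seq \<times> real \<Rightarrow> seq \<times> real) \<Rightarrow> (seq \<times> real \<Rightarrow> real) \<Rightarrow> seq \<times> real \<Rightarrow> nat \<Rightarrow> real" where
  "avg T h z n = (\<Sum>i<n. h ((T ^^ i) z)) / real n"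

lemma lin_conv:
  assumes K: "compact K" and Kc: "closed K" and P: "prob_space \<nu>" and s: "sets \<nu> = sets borel"
    and hyp: "\<forall>L. avg T (mnm L) z \<longlonglongrightarrow> (LINT w:K|\<nu>. mnm L w)"
  shows "avg T (lin CL) z \<longlonglongrightarrow> (LINT w:K|\<nu>. lin CL w)"
proof (induction CL)
  case Nil
  then show ?case by (simp add: avg_def lin_Nil)
next
  case (Cons cL CL)
  have e1: "avg T (lin (cL # CL)) z = (\<lambda>n. fst cL * avg T (mnm (snd cL)) z n + avg T (lin CL) z n)"
    by (simp add: avg_def lin_Cons fun_eq_iff sum.distrib sum_distrib_left add_divide_distrib)
  have i1: "set_integrable \<nu> K (mnm L)" for L
    by (rule cont_set_integrable[OF K Kc P s continuous_on_subset[OF cont_mono]]) simp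
  have i2: "set_integrable \<nu> K (lin CL)"
    by (rule cont_set_integrable[OF K Kc P s continuous_on_subset[OF cont_lin]]) simp
  have i3: "set_integrable \<nu> K (\<lambda>w. fst cL * mnm (snd cL) w)"
    by (rule cont_set_integrable[OF K Kc P s continuous_on_subset[of UNIV]]) (intro continuous_on_mult continuous_on_const cont_mono, simp)
  have e2: "(LINT w:K|\<nu>. lin (cL # CL) w) = fst cL * (LINT w:K|\<nu>. mnm (snd cL) w) + (LINT w:K|\<nu>. lin CL w)"
    by (simp add: lin_Cons set_integral_add(2)[OF i3 i2])
  show ?case unfolding e1 e2
    by (intro tendsto_add tendsto_mult_left Cons hyp[rule_format])
qed

lemma avg_close:
  assumes "\<forall>i. \<bar>h1 ((T ^^ i) z) - h2 ((T ^^ i) z)\<bar> \<le> e" "e \<ge> 0"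
  shows "\<bar>avg T h1 z n - avg T h2 z n\<bar> \<le> e"
proof (cases "n = 0")
  case True
  then show ?thesis using assms by (simp add: avg_def)
next
  case False
  have "\<bar>avg T h1 z n - avg T h2 z n\<bar> = \<bar>\<Sum>i<n. h1 ((T ^^ i) z) - h2 ((T ^^ i) z)\<bar> / real n"
    by (simp add: avg_def diff_divide_distrib[symmetric] sum_subtractf)
  also have "\<dots> \<le> (\<Sum>i<n. \<bar>h1 ((T ^^ i) z) - h2 ((T ^^ i) z)\<bar>) / real n"
    by (intro divide_right_mono sum_abs) simp
  also have "\<dots> \<le> (\<Sum>i<n. e) / real n"
    by (intro divide_right_mono sum_mono assms(1)[rule_format]) simp
  also have "\<dots> = e" using False by simp
  finally show ?thesis .
qed

lemma orbit_K: "\<forall>z\<in>K. T z \<in> K \<Longrightarrow> z \<in> K \<Longrightarrow> (T ^^ i) z \<in> K"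
  by (induction i) auto

lemma basin_char:
  fixes \<nu> :: "(seq \<times> real) measure"
  assumes K: "compact K" and Kc: "closed K" and P: "prob_space \<nu>" and s: "sets \<nu> = sets borel"
    and TK: "\<forall>z\<in>K. T z \<in> K" and z: "z \<in> K"
    and hyp: "\<forall>L. avg T (mnm L) z \<longlonglongrightarrow> (LINT w:K|\<nu>. mnm L w)"
    and phi: "continuous_on K \<phi>"
  shows "avg T \<phi> z \<longlonglongrightarrow> (LINT w:K|\<nu>. \<phi> w)"
proof (rule LIMSEQ_I)
  fix r :: real assume r: "r > 0"
  obtain CL where CL: "\<forall>w\<in>K. \<bar>\<phi> w - lin CL w\<bar> < r / 3"
    using SW_approx[OF K phi, of "r/3"] r by auto
  have conv: "avg T (lin CL) z \<longlonglongrightarrow> (LINT w:K|\<nu>. lin CL w)"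
    by (rule lin_conv[OF K Kc P s hyp])
  obtain M where M: "\<forall>n\<ge>M. norm (avg T (lin CL) z n - (LINT w:K|\<nu>. lin CL w)) < r / 3"
    using LIMSEQ_D[OF conv, of "r/3"] r by auto
  have ip: "set_integrable \<nu> K \<phi>" by (rule cont_set_integrable[OF K Kc P s phi])
  have il: "set_integrable \<nu> K (lin CL)"
    by (rule cont_set_integrable[OF K Kc P s continuous_on_subset[OF cont_lin]]) simp
  have I: "\<bar>(LINT w:K|\<nu>. \<phi> w) - (LINT w:K|\<nu>. lin CL w)\<bar> \<le> r / 3"
  proof -
    have "(LINT w:K|\<nu>. \<phi> w) - (LINT w:K|\<nu>. lin CL w) = (LINT w:K|\<nu>. \<phi> w - lin CL w)"
      by (rule set_integral_diff(2)[OF ip il, symmetric])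
    also have "\<dots> = integral\<^sup>L \<nu> (\<lambda>w. indicator K w *\<^sub>R (\<phi> w - lin CL w))"
      by (simp add: set_lebesgue_integral_def)
    finally have eq: "(LINT w:K|\<nu>. \<phi> w) - (LINT w:K|\<nu>. lin CL w) = integral\<^sup>L \<nu> (\<lambda>w. indicator K w *\<^sub>R (\<phi> w - lin CL w))" .
    have "integrable \<nu> (\<lambda>w. indicator K w *\<^sub>R (\<phi> w - lin CL w))"
      using set_integral_diff(1)[OF ip il] by (simp add: set_integrable_def)
    moreover have "\<bar>indicator K w *\<^sub>R (\<phi> w - lin CL w)\<bar> \<le> r / 3" for w
      using CL r by (cases "w \<in> K") (auto simp: indicator_def less_imp_le)
    ultimately show ?thesis unfolding eq by (intro bound_int[OF P])
  qed
  show "\<exists>no. \<forall>n\<ge>no. norm (avg T \<phi> z n - (LINT w:K|\<nu>. \<phi> w)) < r"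
  proof (intro exI allI impI)
    fix n assume n: "n \<ge> M"
    have a: "\<bar>avg T \<phi> z n - avg T (lin CL) z n\<bar> \<le> r / 3"
      by (rule avg_close) (use CL orbit_K[OF TK z] r in \<open>auto intro: less_imp_le\<close>)
    have b: "\<bar>avg T (lin CL) z n - (LINT w:K|\<nu>. lin CL w)\<bar> < r / 3" using M n by auto
    show "norm (avg T \<phi> z n - (LINT w:K|\<nu>. \<phi> w)) < r"
      using a b I by (simp only: real_norm_def)
  qed
qed

lemma meas_mono[measurable]: "mnm L \<in> borel_measurable borel"
  by (rule borel_measurable_continuous_onI[OF cont_mono])

lemma pow_eq: "\<forall>z\<in>K. T z \<in> K \<Longrightarrow> \<forall>z\<in>K. Tm z = T z \<Longrightarrow> z \<in> K \<Longrightarrow> (Tm ^^ i) z = (T ^^ i) z"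
  by (induction i) (auto simp: orbit_K)

lemma basin_sets:
  fixes \<nu> :: "(seq \<times> real) measure" and Tm :: "seq \<times> real \<Rightarrow> seq \<times> real"
  assumes K: "compact K" and Kc: "closed K" and P: "prob_space \<nu>" and s: "sets \<nu> = sets borel"
    and TK: "\<forall>z\<in>K. T z \<in> K" and Tm[measurable]: "Tm \<in> borel_measurable borel" and eq: "\<forall>z\<in>K. Tm z = T z"
  shows "{z \<in> K. \<forall>\<phi>. continuous_on K \<phi> \<longrightarrow> (\<lambda>n. (\<Sum>i<n. \<phi> ((T ^^ i) z)) / real n) \<longlonglongrightarrow> (LINT w:K|\<nu>. \<phi> w)} \<in> sets borel"
proof -
  define c where "c L = (LINT w:K|\<nu>. mnm L w)" for L
  have Kb[measurable]: "K \<in> sets borel" using Kc by (simp add: borel_closed)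
  have "Measurable.pred borel (\<lambda>z. z \<in> K \<and> (\<forall>L. Cauchy (\<lambda>n. (\<Sum>i<n. mnm L ((Tm ^^ i) z)) / real n) \<and>
           lim (\<lambda>n. (\<Sum>i<n. mnm L ((Tm ^^ i) z)) / real n) = c L))"
    by measurable
  then have m: "{z \<in> space borel. z \<in> K \<and> (\<forall>L. Cauchy (\<lambda>n. (\<Sum>i<n. mnm L ((Tm ^^ i) z)) / real n) \<and>
           lim (\<lambda>n. (\<Sum>i<n. mnm L ((Tm ^^ i) z)) / real n) = c L)} \<in> sets borel"
    by (simp add: pred_def)
  have "{z \<in> K. \<forall>\<phi>. continuous_on K \<phi> \<longrightarrow> (\<lambda>n. (\<Sum>i<n. \<phi> ((T ^^ i) z)) / real n) \<longlonglongrightarrow> (LINT w:K|\<nu>. \<phi> w)}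
     = {z \<in> space borel. z \<in> K \<and> (\<forall>L. Cauchy (\<lambda>n. (\<Sum>i<n. mnm L ((Tm ^^ i) z)) / real n) \<and>
           lim (\<lambda>n. (\<Sum>i<n. mnm L ((Tm ^^ i) z)) / real n) = c L)}" (is "?A = ?B")
  proof (intro equalityI subsetI)
    fix z assume "z \<in> ?A"
    then have z: "z \<in> K" and h: "\<And>\<phi>. continuous_on K \<phi> \<Longrightarrow> (\<lambda>n. (\<Sum>i<n. \<phi> ((T ^^ i) z)) / real n) \<longlonglongrightarrow> (LINT w:K|\<nu>. \<phi> w)"
      by auto
    have "(\<lambda>n. (\<Sum>i<n. mnm L ((Tm ^^ i) z)) / real n) \<longlonglongrightarrow> c L" for L
      using h[OF continuous_on_subset[OF cont_mono, of K]] pow_eq[OF TK eq z] by (simp add: c_def)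
    then show "z \<in> ?B" using z by (auto intro: convergent_Cauchy convergentI limI)
  next
    fix z assume "z \<in> ?B"
    then have z: "z \<in> K" and h: "\<And>L. Cauchy (\<lambda>n. (\<Sum>i<n. mnm L ((Tm ^^ i) z)) / real n) \<and>
           lim (\<lambda>n. (\<Sum>i<n. mnm L ((Tm ^^ i) z)) / real n) = c L" by auto
    have "(\<lambda>n. (\<Sum>i<n. mnm L ((Tm ^^ i) z)) / real n) \<longlonglongrightarrow> c L" for L
      using h[of L] by (metis Cauchy_convergent convergent_LIMSEQ_iff)
    then have hyp: "\<forall>L. avg T (mnm L) z \<longlonglongrightarrow> (LINT w:K|\<nu>. mnm L w)"
      using pow_eq[OF TK eq z] by (simp add: avg_def[abs_def] c_def)
    show "z \<in> ?A" using basin_char[OF K Kc P s TK z hyp] z by (simp add: avg_def[abs_def])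
  qed
  with m show ?thesis by simp
qed

lemma C_closed: "closed {\<omega>::seq. \<omega> 0 \<le> N}"
  using closed_coord2[of "\<lambda>a b. a \<le> N" 0 0] by simp

lemma meas_R: "R \<in> borel_measurable borel"
  unfolding R_def by (intro borel_measurable_continuous_onI continuous_intros)

lemma push_pair:
  fixes lam :: "seq measure"
  assumes Plam: "prob_space lam" and slam: "sets lam = sets borel"
  shows "distr lam borel (proj N) \<Otimes>\<^sub>M lborel = distr (lam \<Otimes>\<^sub>M lborel) (distr lam borel (proj N) \<Otimes>\<^sub>M lborel) (PiMap N)"
proof (rule pair_measure_eqI)
  have mp: "proj N \<in> measurable lam borel"
    using meas_proj measurable_cong_sets[OF slam refl] by blast
  show "sigma_finite_measure (distr lam borel (proj N))"
    by (rule prob_space_imp_sigma_finite[OF prob_space.prob_space_distr[OF Plam mp]])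
  show "sigma_finite_measure (lborel :: real measure)" by (rule sigma_finite_lborel)
  show "sets (distr lam borel (proj N) \<Otimes>\<^sub>M lborel) = sets (distr (lam \<Otimes>\<^sub>M lborel) (distr lam borel (proj N) \<Otimes>\<^sub>M lborel) (PiMap N))"
    by simp
  have s1: "sets (lam \<Otimes>\<^sub>M lborel) = sets (borel :: (seq \<times> real) measure)"
    using sets_pair_measure_cong[OF slam sets_lborel] borel_prod[where 'a=seq and 'b=real] by metis
  have s2: "sets (distr lam borel (proj N) \<Otimes>\<^sub>M lborel) = sets (borel :: (seq \<times> real) measure)"
    using sets_pair_measure_cong[OF sets_distr[of lam borel "proj N"] sets_lborel] borel_prod[where 'a=seq and 'b=real] by metis
  have mPi: "PiMap N \<in> measurable (lam \<Otimes>\<^sub>M lborel) (distr lam borel (proj N) \<Otimes>\<^sub>M lborel)"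
    using meas_PiMap measurable_cong_sets[OF s1 s2] by blast
  have sp: "space lam = UNIV" using sets_eq_imp_space_eq[OF slam] by simp
  fix A B assume A: "A \<in> sets (distr lam borel (proj N))" and B: "B \<in> sets (lborel :: real measure)"
  have Ab: "A \<in> sets borel" and Bb: "B \<in> sets borel" using A B by auto
  define X where "X = proj N -` A"
  define C where "C = {\<omega>::seq. \<omega> 0 \<le> N}"
  have Xs: "X \<in> sets lam" unfolding X_def slam
    using measurable_sets[OF meas_proj Ab] by simp
  have Cs: "C \<in> sets lam" unfolding C_def slam using C_closed by (simp add: borel_closed)
  have RB: "R -` B \<in> sets lborel" using measurable_sets[OF meas_R Bb] by simp
  have eR: "emeasure lborel (R -` B) = emeasure lborel B"
  proof -
    have "emeasure lborel B = emeasure (distr lborel borel R) B" by (simp add: distr_R)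
    also have "\<dots> = emeasure lborel (R -` B)" using Bb by (simp add: emeasure_distr meas_R)
    finally show ?thesis by simp
  qed
  have AB: "A \<times> B \<in> sets (distr lam borel (proj N) \<Otimes>\<^sub>M lborel)" using A B by simp
  have "emeasure (distr (lam \<Otimes>\<^sub>M lborel) (distr lam borel (proj N) \<Otimes>\<^sub>M lborel) (PiMap N)) (A \<times> B)
      = emeasure (lam \<Otimes>\<^sub>M lborel) (PiMap N -` (A \<times> B) \<inter> space (lam \<Otimes>\<^sub>M lborel))"
    by (rule emeasure_distr[OF mPi AB])
  also have "PiMap N -` (A \<times> B) \<inter> space (lam \<Otimes>\<^sub>M lborel) = (X \<inter> C) \<times> B \<union> (X - C) \<times> (R -` B)"
    by (auto simp: space_pair_measure sp X_def C_def PiMap_def split: if_splits)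
  also have "emeasure (lam \<Otimes>\<^sub>M lborel) ((X \<inter> C) \<times> B \<union> (X - C) \<times> (R -` B))
      = emeasure (lam \<Otimes>\<^sub>M lborel) ((X \<inter> C) \<times> B) + emeasure (lam \<Otimes>\<^sub>M lborel) ((X - C) \<times> (R -` B))"
    by (rule plus_emeasure[symmetric]) (use Xs Cs B RB in auto)
  also have "\<dots> = emeasure lam (X \<inter> C) * emeasure lborel B + emeasure lam (X - C) * emeasure lborel B"
    using Xs Cs B RB by (simp add: lborel.emeasure_pair_measure_Times eR)
  also have "\<dots> = (emeasure lam (X \<inter> C) + emeasure lam (X - C)) * emeasure lborel B"
    by (simp add: distrib_right)
  also have "emeasure lam (X \<inter> C) + emeasure lam (X - C) = emeasure lam X"
  proof -
    have "emeasure lam (X \<inter> C) + emeasure lam (X - C) = emeasure lam ((X \<inter> C) \<union> (X - C))"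
      by (rule plus_emeasure) (use Xs Cs in auto)
    also have "(X \<inter> C) \<union> (X - C) = X" by auto
    finally show ?thesis .
  qed
  also have "emeasure lam X = emeasure (distr lam borel (proj N)) A"
    using Ab by (simp add: emeasure_distr mp X_def sp)
  finally show "emeasure (distr lam borel (proj N)) A * emeasure lborel B =
     emeasure (distr (lam \<Otimes>\<^sub>M lborel) (distr lam borel (proj N) \<Otimes>\<^sub>M lborel) (PiMap N)) (A \<times> B)" by simp
qed

theorem lemma3p17:
  fixes N :: nat and f :: "nat \<Rightarrow> real \<Rightarrow> real"
    and p :: "nat \<Rightarrow> real" and P :: "nat \<Rightarrow> nat \<Rightarrow> real"
    and lam :: "seq measure" and mu :: "(seq \<times> real) measure"
  assumes "N \<ge> 1"
    and "\<forall>i\<in>{1..N}. C1_diffeo_onto_image (f i)"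
    and "markov_measure (2 * N) (Aadm N f) p P lam"
    and "symmetric_markov N p P"
    and "physical (Gmap N f) (SigmaA N f) lam mu"
  shows "physical (Fmap f) (SigmaN N) (distr lam borel (proj N)) (distr mu borel (PiMap N))
       \<and> PiMap N ` basin (Gmap N f) (SigmaA N f) mu
           \<subseteq> basin (Fmap f) (SigmaN N) (distr mu borel (PiMap N))"
proof -
  define \<nu> where "\<nu> = distr mu borel (PiMap N)"
  define lam0 where "lam0 = distr lam borel (proj N)"
  define K where "K = SigmaN N \<times> II"
  define SAI where "SAI = SigmaA N f \<times> II"
  have f1: "\<forall>i\<in>{1..N}. C1_diffeo_onto_image (f i)" by (rule assms(2))
  have Plam: "prob_space lam" and slam: "sets lam = sets borel"
    using assms(3) unfolding markov_measure_def by auto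
  have inv: "invariant_prob (Gmap N f) (SigmaA N f) mu"
    and pos: "emeasure (lam \<Otimes>\<^sub>M lborel) (basin (Gmap N f) (SigmaA N f) mu) > 0"
    using assms(5) unfolding physical_def by auto
  have Pmu: "prob_space mu" and smu: "sets mu = sets borel" and mSAI: "emeasure mu SAI = 1"
    and invG: "\<forall>A\<in>sets mu. emeasure mu (Gmap N f -` A \<inter> SAI) = emeasure mu A"
    using inv unfolding invariant_prob_def SAI_def by auto
  have spmu: "space mu = UNIV" using sets_eq_imp_space_eq[OF smu] by simp
  have mPimu: "PiMap N \<in> measurable mu borel"
    using meas_PiMap measurable_cong_sets[OF smu refl] by blast
  have Pnu: "prob_space \<nu>" unfolding \<nu>_def by (rule prob_space.prob_space_distr[OF Pmu mPimu])
  have snu: "sets \<nu> = sets borel" unfolding \<nu>_def by simp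
  have Kc: "closed K" unfolding K_def by (intro closed_Times closed_SigmaN) (simp add: II_def)
  have Kb: "K \<in> sets borel" using Kc by (simp add: borel_closed)
  have Kcomp: "compact K" unfolding K_def by (rule compact_K)
  have SAIb: "SAI \<in> sets borel" unfolding SAI_def using closed_SAI by (simp add: borel_closed)
  have SAImu: "SAI \<in> sets mu" using SAIb smu by simp
  have AE_SAI: "AE w in mu. w \<in> SAI"
  proof -
    interpret prob_space mu by (rule Pmu)
    have "prob SAI = 1" using mSAI by (simp add: measure_def)
    then show ?thesis using AE_in_set_eq_1[OF SAImu] by simp
  qed
  have PiK: "w \<in> SAI \<Longrightarrow> PiMap N w \<in> K" for w unfolding SAI_def K_def by (rule PiMap_SAI)
  have restr: "emeasure mu B = emeasure mu (B \<inter> SAI)" if "B \<in> sets mu" for B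
    by (rule emeasure_eq_AE) (use AE_SAI that SAImu in auto)

  have incl: "PiMap N ` basin (Gmap N f) (SigmaA N f) mu \<subseteq> basin (Fmap f) (SigmaN N) \<nu>"
  proof
    fix y assume "y \<in> PiMap N ` basin (Gmap N f) (SigmaA N f) mu"
    then obtain z where zb: "z \<in> basin (Gmap N f) (SigmaA N f) mu" and yz: "y = PiMap N z" by blast
    have zS: "z \<in> SAI" using zb unfolding basin_def SAI_def by auto
    have hz: "\<And>\<psi>. continuous_on SAI \<psi> \<Longrightarrow> (\<lambda>n. (\<Sum>i<n. \<psi> ((Gmap N f ^^ i) z)) / real n) \<longlonglongrightarrow> (LINT w:SAI|mu. \<psi> w)"
      using zb unfolding basin_def SAI_def by auto
    have yK: "y \<in> K" using PiK[OF zS] yz by simp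
    have "(\<lambda>n. (\<Sum>i<n. \<phi> ((Fmap f ^^ i) y)) / real n) \<longlonglongrightarrow> (LINT w:K|\<nu>. \<phi> w)"
      if phi: "continuous_on K \<phi>" for \<phi>
    proof -
      have cpsi: "continuous_on SAI (\<lambda>w. \<phi> (PiMap N w))"
        by (rule continuous_on_compose2[OF phi continuous_on_subset[OF cont_PiMap]]) (use PiK in auto)
      have avg_eq: "(\<Sum>i<n. \<phi> ((Fmap f ^^ i) y)) = (\<Sum>i<n. \<phi> (PiMap N ((Gmap N f ^^ i) z)))" for n
        using semiconj_pow[OF f1 zS[unfolded SAI_def]] yz by simp
      have mg: "(\<lambda>w. indicator K w *\<^sub>R \<phi> w) \<in> borel_measurable borel"
        by (rule borel_measurable_continuous_on_indicator[OF Kb phi])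
      have mg2: "(\<lambda>w. indicator SAI w *\<^sub>R \<phi> (PiMap N w)) \<in> borel_measurable mu"
        using borel_measurable_continuous_on_indicator[OF SAIb cpsi] measurable_cong_sets[OF smu refl] by blast
      have "(LINT w:K|\<nu>. \<phi> w) = integral\<^sup>L \<nu> (\<lambda>w. indicator K w *\<^sub>R \<phi> w)"
        by (simp add: set_lebesgue_integral_def)
      also have "\<dots> = integral\<^sup>L mu (\<lambda>w. indicator K (PiMap N w) *\<^sub>R \<phi> (PiMap N w))"
        unfolding \<nu>_def by (rule integral_distr[OF mPimu mg])
      also have "\<dots> = integral\<^sup>L mu (\<lambda>w. indicator SAI w *\<^sub>R \<phi> (PiMap N w))"
      proof (rule integral_cong_AE)
        show "(\<lambda>w. indicator K (PiMap N w) *\<^sub>R \<phi> (PiMap N w)) \<in> borel_measurable mu"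
          using measurable_compose[OF mPimu mg] by (simp add: o_def)
        show "(\<lambda>w. indicator SAI w *\<^sub>R \<phi> (PiMap N w)) \<in> borel_measurable mu" by (rule mg2)
        show "AE w in mu. indicator K (PiMap N w) *\<^sub>R \<phi> (PiMap N w) = indicator SAI w *\<^sub>R \<phi> (PiMap N w)"
          using AE_SAI by eventually_elim (simp add: PiK)
      qed
      also have "\<dots> = (LINT w:SAI|mu. \<phi> (PiMap N w))"
        by (simp add: set_lebesgue_integral_def)
      finally have ie: "(LINT w:K|\<nu>. \<phi> w) = (LINT w:SAI|mu. \<phi> (PiMap N w))" .
      show ?thesis unfolding avg_eq ie by (rule hz[OF cpsi])
    qed
    with yK show "y \<in> basin (Fmap f) (SigmaN N) \<nu>" unfolding basin_def K_def by auto
  qed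

  have invF: "invariant_prob (Fmap f) (SigmaN N) \<nu>"
    unfolding invariant_prob_def
  proof (intro conjI ballI)
    show "prob_space \<nu>" by (rule Pnu)
    show "sets \<nu> = sets borel" by (rule snu)
    have "emeasure \<nu> K = emeasure mu (PiMap N -` K \<inter> space mu)"
      unfolding \<nu>_def by (rule emeasure_distr[OF mPimu Kb])
    also have "\<dots> = emeasure mu ((PiMap N -` K \<inter> space mu) \<inter> SAI)"
      by (rule restr) (rule measurable_sets[OF mPimu Kb])
    also have "(PiMap N -` K \<inter> space mu) \<inter> SAI = SAI" using PiK by (auto simp: spmu)
    finally show "emeasure \<nu> (SigmaN N \<times> II) = 1" using mSAI by (simp add: K_def)
  next
    fix A assume "A \<in> sets \<nu>"
    then have Ab: "A \<in> sets borel" using snu by simp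
    have e1: "Fmap f -` A \<inter> K = Fm N f -` A \<inter> K"
      using Fm_eq unfolding K_def by auto
    have Fs: "Fmap f -` A \<inter> K \<in> sets borel"
      unfolding e1 using measurable_sets[OF meas_Fm[OF f1] Ab] Kb by (metis Int_commute sets.Int space_borel Int_UNIV_right Int_assoc)
    have "emeasure \<nu> (Fmap f -` A \<inter> K) = emeasure mu (PiMap N -` (Fmap f -` A \<inter> K) \<inter> space mu)"
      unfolding \<nu>_def by (rule emeasure_distr[OF mPimu Fs])
    also have "\<dots> = emeasure mu ((PiMap N -` (Fmap f -` A \<inter> K) \<inter> space mu) \<inter> SAI)"
      by (rule restr) (rule measurable_sets[OF mPimu Fs])
    also have "(PiMap N -` (Fmap f -` A \<inter> K) \<inter> space mu) \<inter> SAI = Gmap N f -` (PiMap N -` A \<inter> space mu) \<inter> SAI"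
    proof (intro equalityI subsetI)
      fix w assume w: "w \<in> (PiMap N -` (Fmap f -` A \<inter> K) \<inter> space mu) \<inter> SAI"
      then have "w \<in> SAI" "Fmap f (PiMap N w) \<in> A" by auto
      moreover have "PiMap N (Gmap N f w) = Fmap f (PiMap N w)"
        using semiconj[of w N f] \<open>w \<in> SAI\<close> unfolding SAI_def by blast
      ultimately show "w \<in> Gmap N f -` (PiMap N -` A \<inter> space mu) \<inter> SAI" by (simp add: spmu)
    next
      fix w assume w: "w \<in> Gmap N f -` (PiMap N -` A \<inter> space mu) \<inter> SAI"
      then have "w \<in> SAI" "PiMap N (Gmap N f w) \<in> A" by auto
      moreover have "PiMap N (Gmap N f w) = Fmap f (PiMap N w)"
        using semiconj[of w N f] \<open>w \<in> SAI\<close> unfolding SAI_def by blast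
      ultimately show "w \<in> (PiMap N -` (Fmap f -` A \<inter> K) \<inter> space mu) \<inter> SAI"
        using PiK by (simp add: spmu)
    qed
    also have "emeasure mu (Gmap N f -` (PiMap N -` A \<inter> space mu) \<inter> SAI) = emeasure mu (PiMap N -` A \<inter> space mu)"
      using invG measurable_sets[OF mPimu Ab] by blast
    also have "\<dots> = emeasure \<nu> A"
      unfolding \<nu>_def by (rule emeasure_distr[OF mPimu Ab, symmetric])
    finally show "emeasure \<nu> (Fmap f -` A \<inter> (SigmaN N \<times> II)) = emeasure \<nu> A" by (simp add: K_def)
  qed

  have Fb: "basin (Fmap f) (SigmaN N) \<nu> \<in> sets borel"
  proof -
    have TK: "\<forall>z\<in>K. Fmap f z \<in> K" using Fmap_K[OF f1] unfolding K_def by blast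
    have eq: "\<forall>z\<in>K. Fm N f z = Fmap f z" using Fm_eq unfolding K_def by blast
    show ?thesis unfolding basin_def K_def[symmetric]
      by (rule basin_sets[OF Kcomp Kc Pnu snu TK meas_Fm[OF f1] eq])
  qed
  have Gs: "basin (Gmap N f) (SigmaA N f) mu \<in> sets (lam \<Otimes>\<^sub>M lborel)"
    using pos by (intro emeasure_neq_0_sets) simp
  have s1: "sets (lam \<Otimes>\<^sub>M lborel) = sets (borel :: (seq \<times> real) measure)"
    using sets_pair_measure_cong[OF slam sets_lborel] borel_prod[where 'a=seq and 'b=real] by metis
  have s2: "sets (lam0 \<Otimes>\<^sub>M lborel) = sets (borel :: (seq \<times> real) measure)"
    unfolding lam0_def using sets_pair_measure_cong[OF sets_distr[of lam borel "proj N"] sets_lborel] borel_prod[where 'a=seq and 'b=real] by metis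
  have mPi: "PiMap N \<in> measurable (lam \<Otimes>\<^sub>M lborel) (lam0 \<Otimes>\<^sub>M lborel)"
    using meas_PiMap measurable_cong_sets[OF s1 s2] by blast
  have sp2: "space (lam \<Otimes>\<^sub>M (lborel :: real measure)) = UNIV" using sets_eq_imp_space_eq[OF s1] by simp
  have Fb2: "basin (Fmap f) (SigmaN N) \<nu> \<in> sets (lam0 \<Otimes>\<^sub>M lborel)" using Fb s2 by simp
  have "emeasure (lam0 \<Otimes>\<^sub>M lborel) (basin (Fmap f) (SigmaN N) \<nu>)
      = emeasure (distr (lam \<Otimes>\<^sub>M lborel) (lam0 \<Otimes>\<^sub>M lborel) (PiMap N)) (basin (Fmap f) (SigmaN N) \<nu>)"
    unfolding lam0_def by (subst push_pair[OF Plam slam]) (rule refl)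
  also have "\<dots> = emeasure (lam \<Otimes>\<^sub>M lborel) (PiMap N -` basin (Fmap f) (SigmaN N) \<nu> \<inter> space (lam \<Otimes>\<^sub>M lborel))"
    by (rule emeasure_distr[OF mPi Fb2])
  also have "\<dots> \<ge> emeasure (lam \<Otimes>\<^sub>M lborel) (basin (Gmap N f) (SigmaA N f) mu)"
    by (rule emeasure_mono) (use incl sp2 measurable_sets[OF mPi Fb2] in auto)
  finally have "emeasure (lam0 \<Otimes>\<^sub>M lborel) (basin (Fmap f) (SigmaN N) \<nu>) > 0" using pos by simp
  then have "physical (Fmap f) (SigmaN N) lam0 \<nu>" using invF unfolding physical_def by simp
  then show ?thesis using incl unfolding \<nu>_def lam0_def by simp
qed

end
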